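(* Let $n$ be even, $F\colon\mathbb F_2^n\to\mathbb F_2^n$ a quadratic APN function, and $\mathcal V_F=\{V_b\colon b\in\mathbb F_2^n\setminus\{0\},\ \dim(V_b)\ge 1\}$. Then for every $b\in\mathbb F_2^n\setminus\{0\}$ the component $F_b$ has amplitude $2^{\frac{n+\dim(V_b)}{2}}$. In particular, if $F$ has amplitude distribution $[0^{k_0},2^{k_2},\dots,(n-2)^{k_{n-2}},n^{k_n}]$, then $\mathcal V_F$ is a vector space partition of $\mathbb F_2^n$ of type $[2^{k_2},\dots,(n-2)^{k_{n-2}},n^{k_n}]$.
   Context: $\langle\cdot,\cdot\rangle$ is the standard dot product. $F$ is APN if for every $a\neq0$ and every $c$, $F(x)+F(x+a)=c$ has at most 2 solutions; $F$ is quadratic if each component $F_b(x)=\langle b,F(x)\rangle$ is a quadratic form plus an affine function. Walsh transform: $W_F(b,a)=\sum_{x\in\mathbb F_2^n}(-1)^{F_b(x)+\langle x,a\rangle}$. For quadratic $F$ and fixed $b$ there is $0\le k\le n$ with $|W_F(b,a)|\in\{0,2^{(n+k)/2}\}$ for all $a$ (the nonzero value attained); $2^{(n+k)/2}$ is the amplitude of $F_b$. The amplitude distribution $[0^{k_0},1^{k_1},\dots,n^{k_n}]$ records that exactly $k_i$ nonzero $b$ give amplitude $2^{(n+i)/2}$. With $D_{F,a}(x)=F(x)+F(x+a)$, $H_b=\{x:\langle b,x\rangle=0\}$, $\overline{H_b}=\{x:\langle b,x\rangle=1\}$: $T_b=\{a:\mathrm{Im}(D_{F,a})=H_b\}\cup\{0\}$,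 $\overline{T_b}=\{a:\mathrm{Im}(D_{F,a})=\overline{H_b}\}$, $V_b=T_b\cup\overline{T_b}$ (a subspace). A vector space partition of $\mathbb F_2^n$ is a set of nonzero subspaces such that each nonzero vector lies in exactly one of them; it has type $[d_1^{n_1},\dots,d_k^{n_k}]$ ($d_1<\dots<d_k$) if it contains exactly $n_i$ subspaces of dimension $d_i$. *)

theory Defs
  imports "HOL-Analysis.Analysis" "HOL-Library.Z2"
begin

text \<open>The space F_2^n is modelled as bit ^ 'n, with n = CARD('n).
  Vector space notions (subspace, dim) are those of the library interpretation
  vec: vector_space (*s) over the field bit.\<close>

type_synonym 'n f2vec = "bit ^ 'n"

definition dotp :: "'n::finite f2vec \<Rightarrow> 'n f2vec \<Rightarrow> bit" where
  "dotp a x = (\<Sum>i\<in>UNIV. a $ i * x $ i)"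

definition component :: "('n::finite f2vec \<Rightarrow> 'n f2vec) \<Rightarrow> 'n f2vec \<Rightarrow> 'n f2vec \<Rightarrow> bit" where
  "component F b x = dotp b (F x)"

definition is_APN :: "('n::finite f2vec \<Rightarrow> 'n f2vec) \<Rightarrow> bool" where
  "is_APN F \<longleftrightarrow> (\<forall>a c. a \<noteq> 0 \<longrightarrow> card {x. F x + F (x + a) = c} \<le> 2)"

definition is_quadratic :: "('n::finite f2vec \<Rightarrow> 'n f2vec) \<Rightarrow> bool" where
  "is_quadratic F \<longleftrightarrow> (\<forall>b. \<exists>(q::'n \<Rightarrow> 'n \<Rightarrow> bit) (l::'n \<Rightarrow> bit) (e::bit).
      \<forall>x. component F b x = (\<Sum>i\<in>UNIV. \<Sum>j\<in>UNIV. q i j * x $ i * x $ j)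
                              + (\<Sum>i\<in>UNIV. l i * x $ i) + e)"

definition walsh :: "('n::finite f2vec \<Rightarrow> 'n f2vec) \<Rightarrow> 'n f2vec \<Rightarrow> 'n f2vec \<Rightarrow> int" where
  "walsh F b a = (\<Sum>x\<in>UNIV. (-1::int) ^ (of_bit (component F b x + dotp x a) :: nat))"

definition has_amplitude :: "('n::finite f2vec \<Rightarrow> 'n f2vec) \<Rightarrow> 'n f2vec \<Rightarrow> real \<Rightarrow> bool" where
  "has_amplitude F b A \<longleftrightarrow>
     (\<forall>a. \<bar>real_of_int (walsh F b a)\<bar> \<in> {0, A}) \<and> (\<exists>a. \<bar>real_of_int (walsh F b a)\<bar> = A)"

definition amp_count :: "('n::finite f2vec \<Rightarrow> 'n f2vec) \<Rightarrow> nat \<Rightarrow> nat" where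
  "amp_count F i = card {b. b \<noteq> 0 \<and> has_amplitude F b (2 powr ((real CARD('n) + real i) / 2))}"

definition derivative :: "('n::finite f2vec \<Rightarrow> 'n f2vec) \<Rightarrow> 'n f2vec \<Rightarrow> 'n f2vec \<Rightarrow> 'n f2vec" where
  "derivative F a x = F x + F (x + a)"

definition hyp :: "'n::finite f2vec \<Rightarrow> 'n f2vec set" where
  "hyp b = {x. dotp b x = 0}"

definition cohyp :: "'n::finite f2vec \<Rightarrow> 'n f2vec set" where
  "cohyp b = {x. dotp b x = 1}"

definition T_set :: "('n::finite f2vec \<Rightarrow> 'n f2vec) \<Rightarrow> 'n f2vec \<Rightarrow> 'n f2vec set" where
  "T_set F b = {a. range (derivative F a) = hyp b} \<union> {0}"

definition Tbar_set :: "('n::finite f2vec \<Rightarrow> 'n f2vec) \<Rightarrow> 'n f2vec \<Rightarrow> 'n f2vec set" where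
  "Tbar_set F b = {a. range (derivative F a) = cohyp b}"

definition V_set :: "('n::finite f2vec \<Rightarrow> 'n f2vec) \<Rightarrow> 'n f2vec \<Rightarrow> 'n f2vec set" where
  "V_set F b = T_set F b \<union> Tbar_set F b"

definition V_family :: "('n::finite f2vec \<Rightarrow> 'n f2vec) \<Rightarrow> 'n f2vec set set" where
  "V_family F = {V_set F b | b. b \<noteq> 0 \<and> vec.dim (V_set F b) \<ge> 1}"

definition is_vs_partition :: "'n::finite f2vec set set \<Rightarrow> bool" where
  "is_vs_partition P \<longleftrightarrow>
     (\<forall>V\<in>P. vec.subspace V \<and> V \<noteq> {0}) \<and>
     (\<forall>x. x \<noteq> 0 \<longrightarrow> (\<exists>!V. V \<in> P \<and> x \<in> V))"

end

theory Submission
  imports Defs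
begin

declare add_bit_eq_xor[simp del] mult_bit_eq_and[simp del]

instance bit :: finite
proof
  have "(UNIV::bit set) = {0,1}" by (auto intro: bit.exhaust)
  then show "finite (UNIV::bit set)" by (metis finite.emptyI finite.insertI)
qed

lemma bit_add_self[simp]: "(x::bit) + x = 0"
  by (cases x) simp_all

lemma vec_add_self[simp]: "(v::bit^'n) + v = 0"
  by (simp add: vec_eq_iff)

lemma vec_minus_eq_add: "(v::bit^'n) - w = v + w"
  by (simp add: vec_eq_iff)

lemma vec_add_cancel_right[simp]: "(v::bit^'n) + w + w = v"
  by (simp add: add.assoc)

definition chi :: "bit \<Rightarrow> int" where "chi t = (-1) ^ (of_bit t :: nat)"

lemma chi_0[simp]: "chi 0 = 1" and chi_1[simp]: "chi 1 = -1"
  by (simp_all add: chi_def)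

lemma chi_add: "chi (s + t) = chi s * chi t"
  by (cases s; cases t) simp_all

lemma card_bit: "CARD(bit) = 2"
proof -
  have u: "(UNIV::bit set) = {0,1}" by (auto intro: bit.exhaust)
  have "card {0::bit,1} = 2" by simp
  then show ?thesis by (metis u)
qed

lemma card_UNIV_vec: "card (UNIV :: ('n::finite f2vec) set) = 2 ^ CARD('n)"
  by (simp add: card_bit)

lemma dotp_add_right: "dotp a (x + y) = dotp a x + dotp a y"
  by (simp add: dotp_def distrib_left sum.distrib)

lemma dotp_add_left: "dotp (a + b) x = dotp a x + dotp b x"
  by (simp add: dotp_def distrib_right sum.distrib)

lemma dotp_comm: "dotp a x = dotp x a"
  by (simp add: dotp_def mult.commute)

lemma dotp_zero_left[simp]: "dotp 0 x = 0" and dotp_zero_right[simp]: "dotp x 0 = 0"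
  by (simp_all add: dotp_def)

lemma dotp_axis: "dotp (axis i 1) v = v $ i"
proof -
  have "\<And>j. axis i 1 $ j * v $ j = (if j = i then v $ j else 0)" by (simp add: axis_def)
  then show ?thesis by (simp add: dotp_def)
qed

lemma cub_term: "(q::bit) * (a+b+c) * (a'+b'+c') = q*(a+b)*(a'+b') + q*(a+c)*(a'+c') + q*(b+c)*(b'+c') + q*a*a' + q*b*b' + q*c*c'"
  by (cases q; cases a; cases b; cases c; cases a'; cases b'; cases c') simp_all

lemma lin_term: "(l::bit) * (a+b+c) = l*(a+b) + l*(a+c) + l*(b+c) + l*a + l*b + l*c"
  by (cases l; cases a; cases b; cases c) simp_all

lemma bit_add_self2[simp]: "(x::bit) + (x + y) = y"
  by (simp add: add.assoc[symmetric])

lemma quad_cubic: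
  assumes "is_quadratic F"
  shows "component F b (x+y+u) = component F b (x+y) + component F b (x+u) + component F b (y+u)
     + component F b x + component F b y + component F b u + component F b 0"
proof -
  obtain q l e where qle: "\<And>x. component F b x = (\<Sum>i\<in>UNIV. \<Sum>j\<in>UNIV. q i j * x $ i * x $ j)
                              + (\<Sum>i\<in>UNIV. l i * x $ i) + e"
    using assms unfolding is_quadratic_def by blast
  define Q where "Q v = (\<Sum>i\<in>UNIV. \<Sum>j\<in>UNIV. q i j * v $ i * v $ j)" for v :: "bit^'a"
  define L where "L v = (\<Sum>i\<in>UNIV. l i * v $ i)" for v :: "bit^'a"
  have c: "component F b v = Q v + L v + e" for v using qle Q_def L_def by simp
  have Q3: "Q (x+y+u) = Q (x+y) + Q (x+u) + Q (y+u) + Q x + Q y + Q u"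
    unfolding Q_def by (simp add: cub_term sum.distrib)
  have L3: "L (x+y+u) = L (x+y) + L (x+u) + L (y+u) + L x + L y + L u"
    unfolding L_def by (simp add: lin_term sum.distrib)
  have "Q 0 = 0" "L 0 = 0" unfolding Q_def L_def by simp_all
  then show ?thesis unfolding c Q3 L3 by (simp add: ac_simps)
qed

lemma F_cubic:
  assumes "is_quadratic F"
  shows "F (x+y+u) = F (x+y) + F (x+u) + F (y+u) + F x + F y + F u + F 0"
proof -
  have "F (x+y+u) $ i = (F (x+y) + F (x+u) + F (y+u) + F x + F y + F u + F 0) $ i" for i
    using quad_cubic[OF assms, of "axis i 1" x y u] by (simp add: component_def dotp_axis)
  then show ?thesis by (simp add: vec_eq_iff)
qed

lemma char_sum:
  fixes S :: "('n::finite f2vec) set" and h :: "'n f2vec \<Rightarrow> bit"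
  assumes closed: "\<forall>u\<in>S. \<forall>v\<in>S. u+v \<in> S" and hadd: "\<forall>u\<in>S. \<forall>v\<in>S. h (u+v) = h u + h v"
  shows "(\<Sum>u\<in>S. chi (h u)) = (if \<forall>u\<in>S. h u = 0 then int (card S) else 0)"
proof (cases "\<forall>u\<in>S. h u = 0")
  case True
  then show ?thesis by simp
next
  case False
  then obtain e where e: "e \<in> S" "h e = 1" by auto
  have img: "(\<lambda>u. u + e) ` S = S"
  proof
    show "(\<lambda>u. u + e) ` S \<subseteq> S" using closed e by auto
    show "S \<subseteq> (\<lambda>u. u + e) ` S"
    proof
      fix v assume "v \<in> S"
      then have "v + e \<in> S" "v = (v + e) + e" using closed e by auto
      then show "v \<in> (\<lambda>u. u + e) ` S" by blast
    qed
  qed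
  have inj: "inj_on (\<lambda>u. u + e) S" by (rule inj_onI) (metis vec_add_cancel_right)
  have "(\<Sum>u\<in>S. chi (h u)) = (\<Sum>u\<in>(\<lambda>u. u + e) ` S. chi (h u))" using img by simp
  also have "\<dots> = (\<Sum>u\<in>S. chi (h (u + e)))" by (simp add: sum.reindex[OF inj])
  also have "\<dots> = (\<Sum>u\<in>S. - chi (h u))"
    by (rule sum.cong) (simp_all add: hadd e chi_add)
  also have "\<dots> = - (\<Sum>u\<in>S. chi (h u))" by (simp add: sum_negf)
  finally have "(\<Sum>u\<in>S. chi (h u)) = 0" by simp
  then show ?thesis by (simp only: if_not_P[OF False])
qed

lemma char_sum_univ:
  fixes h :: "('n::finite f2vec) \<Rightarrow> bit"
  assumes hadd: "\<And>u v. h (u+v) = h u + h v"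
  shows "(\<Sum>u\<in>UNIV. chi (h u)) = (if \<forall>u. h u = 0 then 2 ^ CARD('n) else 0)"
  using char_sum[of UNIV h] hadd by (simp add: card_bit)

lemma dotp_all_zero: "(\<forall>b. dotp b (y::'n::finite f2vec) = 0) \<longleftrightarrow> y = 0"
proof
  assume "\<forall>b. dotp b y = 0"
  then have "y $ i = 0" for i using dotp_axis[of i y] by metis
  then show "y = 0" by (simp add: vec_eq_iff)
qed simp

lemma dot_char: "(\<Sum>b\<in>UNIV. chi (dotp b (y::'n::finite f2vec))) = (if y = 0 then 2 ^ CARD('n) else 0)"
  using char_sum_univ[of "\<lambda>b. dotp b y"] dotp_all_zero[of y] by (simp add: dotp_add_left)

lemma card_span_indep:
  fixes B :: "('n::finite f2vec) set"
  assumes "finite B" "vec.independent B"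
  shows "card (vec.span B) = 2 ^ card B"
  using assms
proof (induction B rule: finite_induct)
  case empty
  then show ?case by simp
next
  case (insert x B)
  have indB: "vec.independent B" and xn: "x \<notin> vec.span B"
    using insert.prems insert.hyps by (auto simp: vec.independent_insert)
  have sp: "vec.span (insert x B) = vec.span B \<union> (\<lambda>v. v + x) ` vec.span B"
  proof -
    have "vec.span (insert x B) = {y. \<exists>k. y - k *s x \<in> vec.span B}" by (rule vec.span_insert)
    also have "\<dots> = vec.span B \<union> (\<lambda>v. v + x) ` vec.span B"
    proof (intro set_eqI iffI)
      fix y assume "y \<in> {y. \<exists>k. y - k *s x \<in> vec.span B}"
      then obtain k where k: "y - k *s x \<in> vec.span B" by auto
      show "y \<in> vec.span B \<union> (\<lambda>v. v + x) ` vec.span B"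
      proof (cases k)
        case zero
        then show ?thesis using k by simp
      next
        case one
        then have "y + x \<in> vec.span B" using k by (simp add: vec_minus_eq_add)
        moreover have "y = (y + x) + x" by simp
        ultimately show ?thesis by blast
      qed
    next
      fix y assume "y \<in> vec.span B \<union> (\<lambda>v. v + x) ` vec.span B"
      then show "y \<in> {y. \<exists>k. y - k *s x \<in> vec.span B}"
      proof
        assume "y \<in> vec.span B"
        then have "y - 0 *s x \<in> vec.span B" by simp
        then show ?thesis by blast
      next
        assume "y \<in> (\<lambda>v. v + x) ` vec.span B"
        then obtain v where "v \<in> vec.span B" "y = v + x" by auto
        then have "y - 1 *s x \<in> vec.span B" by (simp add: vec_minus_eq_add)
        then show ?thesis by blast
      qed
    qed
    finally show ?thesis .
  qed
  have disj: "vec.span B \<inter> (\<lambda>v. v + x) ` vec.span B = {}"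
  proof (rule ccontr)
    assume "vec.span B \<inter> (\<lambda>v. v + x) ` vec.span B \<noteq> {}"
    then obtain v w where vw: "w \<in> vec.span B" "v \<in> vec.span B" and wx: "w = v + x" by auto
    have "x = w + v" using wx by (simp only: add.commute[of v x] vec_add_cancel_right)
    moreover have "w + v \<in> vec.span B" using vw by (simp add: vec.span_add)
    ultimately show False using xn by simp
  qed
  have inj: "inj_on (\<lambda>v. v + x) (vec.span B)" by (rule inj_onI) (metis vec_add_cancel_right)
  have "card (vec.span (insert x B)) = card (vec.span B) + card ((\<lambda>v. v + x) ` vec.span B)"
    unfolding sp by (rule card_Un_disjoint) (simp_all add: disj)
  also have "\<dots> = 2 * card (vec.span B)" by (simp add: card_image[OF inj])
  finally show ?case using insert.IH[OF indB] insert.hyps by simp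
qed

lemma card_subspace:
  fixes S :: "('n::finite f2vec) set"
  assumes "vec.subspace S"
  shows "card S = 2 ^ vec.dim S"
proof -
  obtain B where "finite B" "B \<subseteq> S" "vec.independent B" "vec.span B = S" "card B = vec.dim S"
    using vec.basis_subspace_exists[OF assms] by blast
  then show ?thesis using card_span_indep by metis
qed

definition Rad :: "('n::finite f2vec \<Rightarrow> 'n f2vec) \<Rightarrow> 'n f2vec \<Rightarrow> 'n f2vec set" where
  "Rad F b = {u. \<forall>x. component F b x + component F b (x+u) + component F b 0 + component F b u = 0}"

lemma Rad_zero: "0 \<in> Rad F b"
  by (simp add: Rad_def)

lemma Rad_add:
  assumes "u \<in> Rad F b" "v \<in> Rad F b"
  shows "u + v \<in> Rad F b"
proof -
  let ?f = "component F b"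
  have A: "?f x + ?f (x+u) + ?f 0 + ?f u = 0" for x using assms(1) by (simp add: Rad_def)
  have B: "?f x + ?f (x+v) + ?f 0 + ?f v = 0" for x using assms(2) by (simp add: Rad_def)
  have "?f x + ?f (x+(u+v)) + ?f 0 + ?f (u+v) = 0" for x
  proof -
    have "?f x + ?f (x+(u+v)) + ?f 0 + ?f (u+v) =
      (?f x + ?f (x+u) + ?f 0 + ?f u) + (?f (x+u) + ?f ((x+u)+v) + ?f 0 + ?f v) + (?f u + ?f (u+v) + ?f 0 + ?f v)"
      by (simp add: ac_simps)
    then show ?thesis using A[of x] B[of "x+u"] B[of u] by simp
  qed
  then show ?thesis by (simp add: Rad_def)
qed

lemma Rad_subspace: "vec.subspace (Rad F b)"
  unfolding vec.subspace_def
proof (intro conjI ballI allI)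
  show "0 \<in> Rad F b" by (rule Rad_zero)
  fix x y assume "x \<in> Rad F b" "y \<in> Rad F b"
  then show "x + y \<in> Rad F b" by (rule Rad_add)
next
  fix c :: bit and x assume "x \<in> Rad F b"
  then show "c *s x \<in> Rad F b" by (cases c) (simp_all add: Rad_zero)
qed

lemma Rad_hom:
  assumes "u \<in> Rad F b" "v \<in> Rad F b"
  shows "dotp (u+v) a + component F b 0 + component F b (u+v) =
     (dotp u a + component F b 0 + component F b u) + (dotp v a + component F b 0 + component F b v)"
proof -
  let ?f = "component F b"
  have B: "?f u + ?f (u+v) + ?f 0 + ?f v = 0" using assms(2) by (simp add: Rad_def)
  have "dotp (u+v) a + ?f 0 + ?f (u+v) = (dotp u a + ?f 0 + ?f u) + (dotp v a + ?f 0 + ?f v)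
     + (?f u + ?f (u+v) + ?f 0 + ?f v)"
    by (simp add: dotp_add_left ac_simps)
  then show ?thesis using B by simp
qed

lemma sum_shift: "(\<Sum>y\<in>UNIV. g y) = (\<Sum>u\<in>UNIV. g (x + u))" for x :: "'n::finite f2vec"
proof -
  have inj: "inj (\<lambda>u. x + u)" by (rule injI) (metis add_left_cancel)
  have "range (\<lambda>u. x + u) = UNIV"
    by (metis surj_def add.assoc vec_add_self add.left_neutral)
  then show ?thesis using sum.reindex[OF inj, of g] by simp
qed


lemma walsh_chi: "walsh F b a = (\<Sum>x\<in>UNIV. chi (component F b x + dotp x a))"
  by (simp add: walsh_def chi_def)

lemma walsh_sq:
  fixes F :: "'n::finite f2vec \<Rightarrow> 'n f2vec"
  assumes Q: "is_quadratic F"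
  shows "(walsh F b a)^2 = 2 ^ CARD('n) * (\<Sum>u\<in>Rad F b. chi (dotp u a + component F b 0 + component F b u))"
proof -
  let ?f = "component F b"
  let ?N = "2 ^ CARD('n) :: int"
  define g where "g u x = ?f x + ?f (x+u) + ?f 0 + ?f u" for u x
  have gadd: "g u (x+y) = g u x + g u y" for u x y
  proof -
    have c: "?f (x+y+u) = ?f (x+y) + ?f (x+u) + ?f (y+u) + ?f x + ?f y + ?f u + ?f 0"
      by (rule quad_cubic[OF Q])
    have "g u (x+y) = ?f (x+y) + ?f (x+y+u) + ?f 0 + ?f u" by (simp add: g_def add.assoc)
    also have "\<dots> = g u x + g u y" unfolding c g_def by (simp add: ac_simps)
    finally show ?thesis .
  qed
  have inner: "(\<Sum>x\<in>UNIV. chi (g u x)) = (if u \<in> Rad F b then ?N else 0)" for u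
  proof -
    have "(\<Sum>x\<in>UNIV. chi (g u x)) = (if \<forall>x. g u x = 0 then ?N else 0)"
      by (rule char_sum_univ) (rule gadd)
    moreover have "(\<forall>x. g u x = 0) = (u \<in> Rad F b)" by (simp add: Rad_def g_def)
    ultimately show ?thesis by simp
  qed
  have "(walsh F b a)^2 = (\<Sum>x\<in>UNIV. chi (?f x + dotp x a)) * (\<Sum>y\<in>UNIV. chi (?f y + dotp y a))"
    by (simp add: walsh_chi power2_eq_square)
  also have "\<dots> = (\<Sum>x\<in>UNIV. \<Sum>y\<in>UNIV. chi (?f x + dotp x a) * chi (?f y + dotp y a))"
    by (simp add: sum_product)
  also have "\<dots> = (\<Sum>x\<in>UNIV. \<Sum>u\<in>UNIV. chi (?f x + dotp x a) * chi (?f (x+u) + dotp (x+u) a))"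
    by (rule sum.cong[OF refl], rule sum_shift)
  also have "\<dots> = (\<Sum>x\<in>UNIV. \<Sum>u\<in>UNIV. chi (dotp u a + ?f 0 + ?f u) * chi (g u x))"
  proof (rule sum.cong[OF refl], rule sum.cong[OF refl])
    fix x u
    have "(?f x + dotp x a) + (?f (x+u) + dotp (x+u) a) = (dotp u a + ?f 0 + ?f u) + g u x"
      by (simp add: g_def dotp_add_left ac_simps)
    then show "chi (?f x + dotp x a) * chi (?f (x+u) + dotp (x+u) a) = chi (dotp u a + ?f 0 + ?f u) * chi (g u x)"
      by (metis chi_add)
  qed
  also have "\<dots> = (\<Sum>u\<in>UNIV. chi (dotp u a + ?f 0 + ?f u) * (\<Sum>x\<in>UNIV. chi (g u x)))"
    by (subst sum.swap) (simp add: sum_distrib_left)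
  also have "\<dots> = (\<Sum>u\<in>UNIV. if u \<in> Rad F b then ?N * chi (dotp u a + ?f 0 + ?f u) else 0)"
    by (rule sum.cong[OF refl]) (simp add: inner mult.commute)
  also have "\<dots> = (\<Sum>u\<in>Rad F b. ?N * chi (dotp u a + ?f 0 + ?f u))"
    by (simp add: sum.inter_filter[symmetric])
  also have "\<dots> = ?N * (\<Sum>u\<in>Rad F b. chi (dotp u a + ?f 0 + ?f u))"
    by (simp add: sum_distrib_left)
  finally show ?thesis .
qed

lemma abs_sq_pow2:
  fixes w :: int
  assumes "w^2 = 2^m"
  shows "\<bar>real_of_int w\<bar> = 2 powr (real m / 2)"
proof -
  have "(2 powr (real m / 2))^2 = 2 powr (real m / 2 + real m / 2)"
    by (simp add: power2_eq_square powr_add[symmetric])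
  also have "\<dots> = 2 ^ m" by (simp add: powr_realpow)
  also have "\<dots> = (real_of_int w)^2" using assms by (metis of_int_numeral of_int_power)
  also have "\<dots> = \<bar>real_of_int w\<bar>^2" by simp
  finally have "(2 powr (real m / 2))^2 = \<bar>real_of_int w\<bar>^2" .
  then show ?thesis by (metis abs_ge_zero powr_ge_zero power2_eq_iff_nonneg)
qed

lemma amp_rad:
  fixes F :: "'n::finite f2vec \<Rightarrow> 'n f2vec"
  assumes Q: "is_quadratic F"
  shows "has_amplitude F b (2 powr ((real CARD('n) + real (vec.dim (Rad F b))) / 2))"
proof -
  let ?f = "component F b"
  let ?R = "Rad F b"
  let ?N = "2 ^ CARD('n) :: int"
  let ?k = "vec.dim ?R"
  let ?A = "2 powr ((real CARD('n) + real ?k) / 2)"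
  define S where "S a = (\<Sum>u\<in>?R. chi (dotp u a + ?f 0 + ?f u))" for a
  have cardR: "card ?R = 2 ^ ?k" by (rule card_subspace[OF Rad_subspace])
  have S_vals: "S a = (if \<forall>u\<in>?R. dotp u a + ?f 0 + ?f u = 0 then int (card ?R) else 0)" for a
    unfolding S_def
  proof (rule char_sum)
    show "\<forall>u\<in>?R. \<forall>v\<in>?R. u+v \<in> ?R" by (blast intro: Rad_add)
    show "\<forall>u\<in>?R. \<forall>v\<in>?R. dotp (u+v) a + ?f 0 + ?f (u+v) = (dotp u a + ?f 0 + ?f u) + (dotp v a + ?f 0 + ?f v)"
      using Rad_hom by blast
  qed
  have W: "(walsh F b a)^2 = ?N * S a" for a
    unfolding S_def by (rule walsh_sq[OF Q])
  have vals: "walsh F b a = 0 \<or> (walsh F b a)^2 = 2 ^ (CARD('n) + ?k)" for a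
  proof (cases "S a = 0")
    case True
    then show ?thesis using W[of a] by simp
  next
    case False
    then have "S a = 2 ^ ?k" using S_vals[of a] cardR by (simp split: if_splits)
    then show ?thesis using W[of a] by (simp add: power_add)
  qed
  have sumS: "(\<Sum>a\<in>UNIV. S a) = ?N"
  proof -
    have "(\<Sum>a\<in>UNIV. S a) = (\<Sum>u\<in>?R. \<Sum>a\<in>UNIV. chi (?f 0 + ?f u) * chi (dotp a u))"
      unfolding S_def by (subst sum.swap) (simp add: chi_add dotp_comm ac_simps)
    also have "\<dots> = (\<Sum>u\<in>?R. chi (?f 0 + ?f u) * (if u = 0 then ?N else 0))"
      by (simp add: sum_distrib_left[symmetric] dot_char)
    also have "\<dots> = (\<Sum>u\<in>?R. if u = 0 then chi (?f 0 + ?f u) * ?N else 0)"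
      by (rule sum.cong) simp_all
    also have "\<dots> = ?N" using Rad_zero[of F b] by (simp add: sum.delta')
    finally show ?thesis .
  qed
  obtain a0 where "S a0 \<noteq> 0"
  proof (rule ccontr)
    assume "\<not> thesis"
    with that have "\<forall>a. S a = 0" by blast
    then show False using sumS by simp
  qed
  then have a0: "walsh F b a0 \<noteq> 0" using W[of a0] by auto
  show ?thesis unfolding has_amplitude_def
  proof (intro conjI allI exI)
    fix a
    show "\<bar>real_of_int (walsh F b a)\<bar> \<in> {0, ?A}"
      using vals[of a] abs_sq_pow2[of "walsh F b a" "CARD('n) + ?k"] by auto
  next
    show "\<bar>real_of_int (walsh F b a0)\<bar> = ?A"
      using vals[of a0] a0 abs_sq_pow2[of "walsh F b a0" "CARD('n) + ?k"] by auto
  qed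
qed

lemma bit_sum_zero_eq: "(s::bit) + t = 0 \<longleftrightarrow> s = t"
  by (cases s; cases t) simp_all

lemma vec_sum_zero_eq: "(s::bit^'n) + t = 0 \<longleftrightarrow> s = t"
  by (metis vec_add_self add.commute vec_add_cancel_right add.left_neutral)

lemma card_hyp:
  fixes b :: "'n::finite f2vec"
  assumes "b \<noteq> 0"
  shows "2 * card (hyp b) = 2 ^ CARD('n)" "2 * card (cohyp b) = 2 ^ CARD('n)"
proof -
  obtain i where "b $ i \<noteq> 0" using assms by (auto simp: vec_eq_iff)
  then have bi: "b $ i = 1" by simp
  let ?e = "axis i (1::bit) :: 'n f2vec"
  have be: "dotp b ?e = 1" using dotp_axis[of i b] bi by (simp add: dotp_comm)
  have img: "(\<lambda>x. x + ?e) ` hyp b = cohyp b"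
  proof
    show "(\<lambda>x. x + ?e) ` hyp b \<subseteq> cohyp b"
      using be by (auto simp: hyp_def cohyp_def dotp_add_right)
    show "cohyp b \<subseteq> (\<lambda>x. x + ?e) ` hyp b"
    proof
      fix y assume "y \<in> cohyp b"
      then have "y + ?e \<in> hyp b" "y = (y + ?e) + ?e" using be by (auto simp: hyp_def cohyp_def dotp_add_right)
      then show "y \<in> (\<lambda>x. x + ?e) ` hyp b" by blast
    qed
  qed
  have inj: "inj_on (\<lambda>x. x + ?e) (hyp b)" by (rule inj_onI) (metis vec_add_cancel_right)
  have eqc: "card (cohyp b) = card (hyp b)" using card_image[OF inj] img by simp
  have un: "hyp b \<union> cohyp b = UNIV"
  proof -
    have "dotp b x = 0 \<or> dotp b x = 1" for x by (cases "dotp b x") simp_all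
    then show ?thesis by (auto simp: hyp_def cohyp_def)
  qed
  have dj: "hyp b \<inter> cohyp b = {}" by (auto simp: hyp_def cohyp_def)
  have "card (hyp b) + card (cohyp b) = 2 ^ CARD('n)"
    using card_Un_disjoint[of "hyp b" "cohyp b"] un dj card_bit by simp
  then show "2 * card (hyp b) = 2 ^ CARD('n)" "2 * card (cohyp b) = 2 ^ CARD('n)" using eqc by simp_all
qed

lemma deriv_fiber:
  fixes F :: "'n::finite f2vec \<Rightarrow> 'n f2vec"
  assumes A: "is_APN F" and a: "a \<noteq> 0"
  shows "card {x. derivative F a x = derivative F a x0} = 2"
proof -
  let ?S = "{x. derivative F a x = derivative F a x0}"
  have le: "card ?S \<le> 2" using A a unfolding is_APN_def derivative_def by blast
  have "x0 + a \<noteq> x0" using a by (metis add_cancel_right_right)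
  moreover have "derivative F a (x0 + a) = derivative F a x0"
    unfolding derivative_def vec_add_cancel_right by (rule add.commute)
  then have "{x0, x0 + a} \<subseteq> ?S" by simp
  ultimately have "2 \<le> card ?S" by (metis card_2_iff card_mono finite)
  then show ?thesis using le by simp
qed

lemma card_range_deriv:
  fixes F :: "'n::finite f2vec \<Rightarrow> 'n f2vec"
  assumes A: "is_APN F" and a: "a \<noteq> 0"
  shows "2 * card (range (derivative F a)) = 2 ^ CARD('n)"
proof -
  let ?D = "derivative F a"
  have U: "UNIV = (\<Union>y\<in>range ?D. {x. ?D x = y})" by auto
  have "card (UNIV :: 'n f2vec set) = (\<Sum>y\<in>range ?D. card {x. ?D x = y})"
    by (subst U, rule card_UN_disjoint) auto
  also have "\<dots> = (\<Sum>y\<in>range ?D. 2)"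
    by (rule sum.cong) (auto simp: deriv_fiber[OF A a])
  finally show ?thesis by (simp add: card_bit)
qed

lemma dotp_deriv: "dotp b (derivative F a x) = component F b x + component F b (x+a)"
  by (simp add: derivative_def component_def dotp_add_right)

lemma V_eq_Rad:
  fixes F :: "'n::finite f2vec \<Rightarrow> 'n f2vec"
  assumes A: "is_APN F" and b: "b \<noteq> 0"
  shows "V_set F b = Rad F b"
proof
  let ?f = "component F b"
  show "V_set F b \<subseteq> Rad F b"
  proof
    fix a assume "a \<in> V_set F b"
    then consider "a = 0" | "range (derivative F a) = hyp b" | "range (derivative F a) = cohyp b"
      by (auto simp: V_set_def T_set_def Tbar_set_def)
    then show "a \<in> Rad F b"
    proof cases
      case 1 then show ?thesis by (simp add: Rad_zero)
    next
      case 2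
      then have "\<forall>x. dotp b (derivative F a x) = 0" by (auto simp: hyp_def)
      then have h: "\<forall>x. ?f x + ?f (x+a) = 0" by (simp add: dotp_deriv)
      have h0: "?f 0 + ?f a = 0" using h[rule_format, of 0] by simp
      have "?f x + ?f (x+a) + ?f 0 + ?f a = 0" for x
      proof -
        have "?f x + ?f (x+a) + ?f 0 + ?f a = (?f x + ?f (x+a)) + (?f 0 + ?f a)" by (simp only: add.assoc)
        then show ?thesis using h h0 by simp
      qed
      then show ?thesis by (simp add: Rad_def)
    next
      case 3
      then have "\<forall>x. dotp b (derivative F a x) = 1" by (auto simp: cohyp_def)
      then have h: "\<forall>x. ?f x + ?f (x+a) = 1" by (simp add: dotp_deriv)
      have h0: "?f 0 + ?f a = 1" using h[rule_format, of 0] by simp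
      have "?f x + ?f (x+a) + ?f 0 + ?f a = 0" for x
      proof -
        have "?f x + ?f (x+a) + ?f 0 + ?f a = (?f x + ?f (x+a)) + (?f 0 + ?f a)" by (simp only: add.assoc)
        then show ?thesis using h h0 by simp
      qed
      then show ?thesis by (simp add: Rad_def)
    qed
  qed
  show "Rad F b \<subseteq> V_set F b"
  proof
    fix a assume aR: "a \<in> Rad F b"
    show "a \<in> V_set F b"
    proof (cases "a = 0")
      case True then show ?thesis by (simp add: V_set_def T_set_def)
    next
      case False
      have cr: "2 * card (range (derivative F a)) = 2 ^ CARD('n)" by (rule card_range_deriv[OF A False])
      have c: "dotp b (derivative F a x) = ?f 0 + ?f a" for x
      proof -
        have "?f x + ?f (x+a) + ?f 0 + ?f a = 0" using aR by (simp add: Rad_def)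
        then have "(?f x + ?f (x+a)) + (?f 0 + ?f a) = 0" by (simp only: add.assoc)
        then show ?thesis unfolding dotp_deriv by (simp only: bit_sum_zero_eq)
      qed
      show ?thesis
      proof (cases "?f 0 + ?f a = 0")
        case True
        have "range (derivative F a) \<subseteq> hyp b" using c True by (auto simp: hyp_def)
        moreover have "card (range (derivative F a)) = card (hyp b)" using cr card_hyp(1)[OF b] by simp
        ultimately have "range (derivative F a) = hyp b" by (simp add: card_subset_eq)
        then show ?thesis by (simp add: V_set_def T_set_def)
      next
        case False
        then have "?f 0 + ?f a = 1" by simp
        then have "range (derivative F a) \<subseteq> cohyp b" using c by (auto simp: cohyp_def)
        moreover have "card (range (derivative F a)) = card (cohyp b)" using cr card_hyp(2)[OF b] by simp
        ultimately have "range (derivative F a) = cohyp b" by (simp add: card_subset_eq)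
        then show ?thesis by (simp add: V_set_def Tbar_set_def)
      qed
    qed
  qed
qed



lemma vec_add_self2[simp]: "(v::bit^'n) + (v + w) = w"
  by (simp add: add.assoc[symmetric])

lemma sum_if_const: "(\<Sum>x\<in>(UNIV::'a::finite set). if P x then (c::int) else 0) = c * int (card {x. P x})"
  by (simp add: sum.If_cases)

lemma count_B:
  fixes F :: "'n::finite f2vec \<Rightarrow> 'n f2vec"
  assumes Q: "is_quadratic F" and A: "is_APN F" and a: "a \<noteq> 0"
  shows "card {b. a \<in> Rad F b} = 2"
proof -
  let ?N = "2 ^ CARD('n) :: int"
  define L where "L x = F x + F (x+a) + F 0 + F a" for x
  have Ladd: "L (x+y) = L x + L y" for x y
  proof -
    have c: "F (x+y+a) = F (x+y) + F (x+a) + F (y+a) + F x + F y + F a + F 0" by (rule F_cubic[OF Q])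
    show ?thesis unfolding L_def c by (simp add: ac_simps)
  qed
  have dL: "dotp b (L x) = component F b x + component F b (x+a) + component F b 0 + component F b a" for b x
    by (simp add: L_def component_def dotp_add_right)
  have memR: "(a \<in> Rad F b) = (\<forall>x. dotp b (L x) = 0)" for b
    by (simp add: Rad_def dL)
  have s1: "(\<Sum>x\<in>UNIV. chi (dotp b (L x))) = (if a \<in> Rad F b then ?N else 0)" for b
  proof -
    have "(\<Sum>x\<in>UNIV. chi (dotp b (L x))) = (if \<forall>x. dotp b (L x) = 0 then ?N else 0)"
      by (rule char_sum_univ) (simp add: Ladd dotp_add_right)
    then show ?thesis by (simp add: memR)
  qed
  have kerL: "{x. L x = 0} = {x. derivative F a x = derivative F a 0}"
  proof -
    have "L x = derivative F a x + derivative F a 0" for x by (simp add: L_def derivative_def add.assoc)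
    then show ?thesis by (simp add: vec_sum_zero_eq)
  qed
  have "(\<Sum>b\<in>UNIV. \<Sum>x\<in>UNIV. chi (dotp b (L x))) = ?N * int (card {b. a \<in> Rad F b})"
    by (simp add: s1 sum_if_const)
  moreover have "(\<Sum>b\<in>UNIV. \<Sum>x\<in>UNIV. chi (dotp b (L x))) = (\<Sum>x\<in>UNIV. \<Sum>b\<in>UNIV. chi (dotp b (L x)))"
    by (rule sum.swap)
  moreover have "\<dots> = ?N * int (card {x. L x = 0})"
    by (simp add: dot_char sum_if_const)
  moreover have "card {x. L x = 0} = 2" unfolding kerL by (rule deriv_fiber[OF A a])
  ultimately have "?N * int (card {b. a \<in> Rad F b}) = ?N * 2" by simp
  then show ?thesis by simp
qed



lemma nz_dim:
  fixes V :: "('n::finite f2vec) set"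
  assumes "vec.subspace V"
  shows "(vec.dim V \<ge> 1) = (\<exists>x\<in>V. x \<noteq> 0)"
proof
  assume d: "vec.dim V \<ge> 1"
  show "\<exists>x\<in>V. x \<noteq> 0"
  proof (rule ccontr)
    assume "\<not> (\<exists>x\<in>V. x \<noteq> 0)"
    then have "V \<subseteq> {0}" by auto
    then have "card V \<le> card {0::'n f2vec}" by (intro card_mono) simp_all
    then have "card V \<le> 1" by simp
    moreover have "card V = 2 ^ vec.dim V" by (rule card_subspace[OF assms])
    moreover have "(2::nat) ^ vec.dim V \<ge> 2 ^ 1" using d by (rule power_increasing) simp
    ultimately show False by simp
  qed
next
  assume "\<exists>x\<in>V. x \<noteq> 0"
  then obtain x where x: "x \<in> V" "x \<noteq> 0" by auto
  have "0 \<in> V" using assms by (rule vec.subspace_0)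
  then have "{0, x} \<subseteq> V" using x by auto
  then have "card {0, x} \<le> card V" by (intro card_mono) simp_all
  then have "2 \<le> card V" using x by simp
  moreover have "card V = 2 ^ vec.dim V" by (rule card_subspace[OF assms])
  ultimately have "2 \<le> (2::nat) ^ vec.dim V" by simp
  then show "vec.dim V \<ge> 1" by (cases "vec.dim V") simp_all
qed

lemma Rad_0_all: "x \<in> Rad F 0"
  by (simp add: Rad_def component_def)

lemma uniq_b:
  fixes F :: "'n::finite f2vec \<Rightarrow> 'n f2vec"
  assumes Q: "is_quadratic F" and A: "is_APN F" and x: "x \<noteq> 0"
  shows "\<exists>b. b \<noteq> 0 \<and> x \<in> Rad F b"
    and "\<And>b b'. b \<noteq> 0 \<Longrightarrow> b' \<noteq> 0 \<Longrightarrow> x \<in> Rad F b \<Longrightarrow> x \<in> Rad F b' \<Longrightarrow> b = b'"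
proof -
  have "card {b. x \<in> Rad F b} = 2" by (rule count_B[OF Q A x])
  then obtain p q where pq: "{b. x \<in> Rad F b} = {p, q}" "p \<noteq> q" by (auto simp: card_2_iff)
  have z: "0 \<in> {b. x \<in> Rad F b}" by (simp add: Rad_0_all)
  show "\<exists>b. b \<noteq> 0 \<and> x \<in> Rad F b"
  proof -
    have "p \<noteq> 0 \<or> q \<noteq> 0" using pq(2) by auto
    moreover have "x \<in> Rad F p" "x \<in> Rad F q" using pq(1) by auto
    ultimately show ?thesis by blast
  qed
  fix b b' assume "b \<noteq> 0" "b' \<noteq> 0" "x \<in> Rad F b" "x \<in> Rad F b'"
  then have "b \<in> {p,q}" "b' \<in> {p,q}" "0 \<in> {p,q}" using pq(1) z by auto
  then show "b = b'" using \<open>b \<noteq> 0\<close> \<open>b' \<noteq> 0\<close> by auto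
qed

lemma amp_unique:
  assumes "has_amplitude F b A" "has_amplitude F b A'"
  shows "A = A'"
  using assms unfolding has_amplitude_def by (metis insert_iff singletonD)

theorem mainTheorem2:
  fixes F :: "'n::finite f2vec \<Rightarrow> 'n f2vec"
  assumes "even CARD('n)"
    and "is_quadratic F"
    and "is_APN F"
  shows "(\<forall>b. b \<noteq> 0 \<longrightarrow>
            has_amplitude F b (2 powr ((real CARD('n) + real (vec.dim (V_set F b))) / 2)))
       \<and> ((\<forall>i. odd i \<longrightarrow> amp_count F i = 0) \<longrightarrow>
            is_vs_partition (V_family F) \<and>
            (\<forall>d. d \<ge> 1 \<longrightarrow> card {V \<in> V_family F. vec.dim V = d} = amp_count F d))"
proof -
  note Q = assms(2) and A = assms(3)
  have VR: "V_set F b = Rad F b" if "b \<noteq> 0" for b using V_eq_Rad[OF A that] .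
  have P1: "\<forall>b. b \<noteq> 0 \<longrightarrow>
            has_amplitude F b (2 powr ((real CARD('n) + real (vec.dim (V_set F b))) / 2))"
    using amp_rad[OF Q] VR by simp
  have dimV: "(vec.dim (V_set F b) \<ge> 1) = (\<exists>x\<in>V_set F b. x \<noteq> 0)" if "b \<noteq> 0" for b
    using nz_dim[OF Rad_subspace] VR[OF that] by simp
  have inj: "inj_on (V_set F) {b. b \<noteq> 0 \<and> vec.dim (V_set F b) \<ge> 1}"
  proof (rule inj_onI)
    fix b b' assume b: "b \<in> {b. b \<noteq> 0 \<and> vec.dim (V_set F b) \<ge> 1}"
      and b': "b' \<in> {b. b \<noteq> 0 \<and> vec.dim (V_set F b) \<ge> 1}" and eq: "V_set F b = V_set F b'"
    then obtain x where x: "x \<in> V_set F b" "x \<noteq> 0" using dimV by blast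
    then have "x \<in> Rad F b" "x \<in> Rad F b'" using eq VR b b' by auto
    then show "b = b'" using uniq_b(2)[OF Q A x(2)] b b' by auto
  qed
  have part: "is_vs_partition (V_family F)"
    unfolding is_vs_partition_def
  proof (intro conjI ballI allI impI)
    fix V assume "V \<in> V_family F"
    then obtain b where b: "V = V_set F b" "b \<noteq> 0" "vec.dim (V_set F b) \<ge> 1"
      by (auto simp: V_family_def)
    show "vec.subspace V" using b VR Rad_subspace by simp
    show "V \<noteq> {0}" using b dimV by auto
  next
    fix x :: "'n f2vec" assume x: "x \<noteq> 0"
    obtain b where b: "b \<noteq> 0" "x \<in> Rad F b" using uniq_b(1)[OF Q A x] by blast
    have bV: "x \<in> V_set F b" using b VR by simp
    have "vec.dim (V_set F b) \<ge> 1" using dimV[OF b(1)] bV x by blast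
    then have mem: "V_set F b \<in> V_family F" using b by (auto simp: V_family_def)
    show "\<exists>!V. V \<in> V_family F \<and> x \<in> V"
    proof (rule ex1I[of _ "V_set F b"])
      show "V_set F b \<in> V_family F \<and> x \<in> V_set F b" using mem bV by simp
    next
      fix V assume V: "V \<in> V_family F \<and> x \<in> V"
      then obtain b' where b': "V = V_set F b'" "b' \<noteq> 0" by (auto simp: V_family_def)
      then have "x \<in> Rad F b'" using V VR by auto
      then have "b' = b" using uniq_b(2)[OF Q A x] b b' by auto
      then show "V = V_set F b" using b' by simp
    qed
  qed
  have cnt: "card {V \<in> V_family F. vec.dim V = d} = amp_count F d" if d: "d \<ge> 1" for d
  proof -
    let ?B = "{b. b \<noteq> 0 \<and> vec.dim (V_set F b) = d}"
    have img: "{V \<in> V_family F. vec.dim V = d} = V_set F ` ?B"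
      using d by (auto simp: V_family_def)
    have inj': "inj_on (V_set F) ?B" by (rule inj_on_subset[OF inj]) (use d in auto)
    have amp: "{b. b \<noteq> 0 \<and> has_amplitude F b (2 powr ((real CARD('n) + real d) / 2))} = ?B"
    proof (intro set_eqI iffI)
      fix b assume "b \<in> {b. b \<noteq> 0 \<and> has_amplitude F b (2 powr ((real CARD('n) + real d) / 2))}"
      then have b: "b \<noteq> 0" and h: "has_amplitude F b (2 powr ((real CARD('n) + real d) / 2))" by auto
      have "2 powr ((real CARD('n) + real d) / 2) = 2 powr ((real CARD('n) + real (vec.dim (V_set F b))) / 2)"
        using amp_unique[OF h] P1 b by blast
      then have "(real CARD('n) + real d) / 2 = (real CARD('n) + real (vec.dim (V_set F b))) / 2"
        by (simp add: powr_inj)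
      then show "b \<in> ?B" using b by simp
    next
      fix b assume "b \<in> ?B"
      then show "b \<in> {b. b \<noteq> 0 \<and> has_amplitude F b (2 powr ((real CARD('n) + real d) / 2))}"
        using P1 by auto
    qed
    show ?thesis unfolding img amp_count_def amp card_image[OF inj'] ..
  qed
  show ?thesis using P1 part cnt by blast
qed

end
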